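(* Consider the boundary driven Kawasaki process on $\{0,1\}^N$ with $N\geq 5$ and $\mu_L>\kappa>0>\mu_R$, $|\mu_R|>\kappa$. For $x\in\mathcal{P}$, let $\mathcal{A}_x$ be the set consisting of $x$ and all its preferred successors. Then $\mathcal{A}_x$ is an attractor, and $\mathcal{A}_x\cap\mathcal{A}_y=\emptyset$ for all $y\in\mathcal{P}$ with $y\neq x$.
   Context: Configurations $x\in\{0,1\}^N$; energy $E(x)=-\kappa\sum_{i=1}^{N-1}x(i)x(i+1)$. $x^{i,j}$: occupations of $i,j$ exchanged; $x^i$ ($i\in\{1,N\}$): occupation of $i$ flipped. Transitions: for $|i-j|=1$, $x(i)\neq x(j)$, $x\to x^{i,j}$ at rate $\exp[-\frac\beta2(E(x^{i,j})-E(x))]$; for $i\in\{1,N\}$, $x\to x^i$ at rate $\exp[\frac{\beta\mu_i}{2}(1-2x(i))]\exp[-\frac\beta2(E(x^i)-E(x))]$, $\mu_1=\mu_L$, $\mu_N=\mu_R$. Two configurations are adjacent if one can jump to the other. For adjacent $x,y$: $\phi(x,y)=\lim_{\beta\to\infty}\frac1\beta\log k(x\to y)$, $\Gamma(x)=-\max_y\phi(x,y)$, $U(x,y)=-\phi(x,y)-\Gamma(x)$; $y$ is a preferred successor of $x$ if $U(x,y)=0$. For a path $D=(x_0,\dots,x_n)$ of adjacent configurations, $U(D)=\sum_m U(x_m,x_{m+1})$, and $\mathcal{U}(x,y)$ is the minimum of $U(D)$ over paths from $x$ to $y$. A non-empty set $A$ is an attractor if $\mathcal{U}(x,y)=0$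 for all $x\neq y\in A$ and $\mathcal{U}(x,y)>0$ for all $x\in A$, $y\notin A$. Writing a configuration by its blocks $(p_0,q_0,\dots,p_n,q_n)$ ($p_0$ occupied sites from site 1, then $q_0$ vacant, then $p_1$ occupied, etc.), $\mathcal{P}$ is the set of configurations with $p_i\geq 3$ for all $i$, $q_i\geq 3$ for $i<n$, and $q_n\geq 2$. *)

theory Defs
  imports Complex_Main
begin

text \<open>Configurations on sites 1..N are lists of length N with entries in {0,1};
  the occupation of site i (1-based) is the (i-1)-th list entry.\<close>

definition conf :: "nat \<Rightarrow> nat list set" where
  "conf N = {x. length x = N \<and> set x \<subseteq> {0, 1}}"

definition occ :: "nat list \<Rightarrow> nat \<Rightarrow> nat" where
  "occ x i = x ! (i - 1)"

definition energy :: "real \<Rightarrow> nat \<Rightarrow> nat list \<Rightarrow> real" where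
  "energy \<kappa> N x = - \<kappa> * (\<Sum>i = 1..N - 1. real (occ x i * occ x (i + 1)))"

definition swap :: "nat list \<Rightarrow> nat \<Rightarrow> nat \<Rightarrow> nat list" where
  "swap x i j = x[i - 1 := occ x j, j - 1 := occ x i]"

definition flip :: "nat list \<Rightarrow> nat \<Rightarrow> nat list" where
  "flip x i = x[i - 1 := 1 - occ x i]"

definition swap_jump :: "nat \<Rightarrow> nat list \<Rightarrow> nat list \<Rightarrow> bool" where
  "swap_jump N x y \<longleftrightarrow> (\<exists>i j. 1 \<le> i \<and> i \<le> N \<and> 1 \<le> j \<and> j \<le> N \<and>
      (i = j + 1 \<or> j = i + 1) \<and> occ x i \<noteq> occ x j \<and> y = swap x i j)"

definition jump :: "nat \<Rightarrow> nat list \<Rightarrow> nat list \<Rightarrow> bool" where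
  "jump N x y \<longleftrightarrow> x \<in> conf N \<and> (swap_jump N x y \<or> y = flip x 1 \<or> y = flip x N)"

definition adjacent :: "nat \<Rightarrow> nat list \<Rightarrow> nat list \<Rightarrow> bool" where
  "adjacent N x y \<longleftrightarrow> jump N x y \<or> jump N y x"

definition rate :: "real \<Rightarrow> real \<Rightarrow> real \<Rightarrow> nat \<Rightarrow> real \<Rightarrow> nat list \<Rightarrow> nat list \<Rightarrow> real" where
  "rate \<kappa> \<mu>L \<mu>R N \<beta> x y =
     (if swap_jump N x y then exp (- \<beta> / 2 * (energy \<kappa> N y - energy \<kappa> N x))
      else if y = flip x 1 then
        exp (\<beta> * \<mu>L / 2 * (1 - 2 * real (occ x 1))) * exp (- \<beta> / 2 * (energy \<kappa> N y - energy \<kappa> N x))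
      else if y = flip x N then
        exp (\<beta> * \<mu>R / 2 * (1 - 2 * real (occ x N))) * exp (- \<beta> / 2 * (energy \<kappa> N y - energy \<kappa> N x))
      else 0)"

definition phi :: "real \<Rightarrow> real \<Rightarrow> real \<Rightarrow> nat \<Rightarrow> nat list \<Rightarrow> nat list \<Rightarrow> real" where
  "phi \<kappa> \<mu>L \<mu>R N x y = Lim at_top (\<lambda>\<beta>. (1 / \<beta>) * ln (rate \<kappa> \<mu>L \<mu>R N \<beta> x y))"

definition Gamma :: "real \<Rightarrow> real \<Rightarrow> real \<Rightarrow> nat \<Rightarrow> nat list \<Rightarrow> real" where
  "Gamma \<kappa> \<mu>L \<mu>R N x = - Max {phi \<kappa> \<mu>L \<mu>R N x y | y. adjacent N x y}"

definition Ucost :: "real \<Rightarrow> real \<Rightarrow> real \<Rightarrow> nat \<Rightarrow> nat list \<Rightarrow> nat list \<Rightarrow> real" where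
  "Ucost \<kappa> \<mu>L \<mu>R N x y = - phi \<kappa> \<mu>L \<mu>R N x y - Gamma \<kappa> \<mu>L \<mu>R N x"

definition preferred_successor :: "real \<Rightarrow> real \<Rightarrow> real \<Rightarrow> nat \<Rightarrow> nat list \<Rightarrow> nat list \<Rightarrow> bool" where
  "preferred_successor \<kappa> \<mu>L \<mu>R N x y \<longleftrightarrow> adjacent N x y \<and> Ucost \<kappa> \<mu>L \<mu>R N x y = 0"

definition is_path :: "nat \<Rightarrow> nat list list \<Rightarrow> nat list \<Rightarrow> nat list \<Rightarrow> bool" where
  "is_path N D x y \<longleftrightarrow> D \<noteq> [] \<and> hd D = x \<and> last D = y \<and> x \<in> conf N \<and>
     (\<forall>m. m + 1 < length D \<longrightarrow> adjacent N (D ! m) (D ! (m + 1)))"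

definition path_cost :: "real \<Rightarrow> real \<Rightarrow> real \<Rightarrow> nat \<Rightarrow> nat list list \<Rightarrow> real" where
  "path_cost \<kappa> \<mu>L \<mu>R N D = (\<Sum>m < length D - 1. Ucost \<kappa> \<mu>L \<mu>R N (D ! m) (D ! (m + 1)))"

text \<open>\<U>(x,y): minimum of U(D) over paths from x to y (taken as an infimum; the minimum
  is attained since U(D) takes values in a discrete set bounded below by 0)\<close>
definition calU :: "real \<Rightarrow> real \<Rightarrow> real \<Rightarrow> nat \<Rightarrow> nat list \<Rightarrow> nat list \<Rightarrow> real" where
  "calU \<kappa> \<mu>L \<mu>R N x y = Inf {path_cost \<kappa> \<mu>L \<mu>R N D | D. is_path N D x y}"

definition attractor :: "real \<Rightarrow> real \<Rightarrow> real \<Rightarrow> nat \<Rightarrow> nat list set \<Rightarrow> bool" where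
  "attractor \<kappa> \<mu>L \<mu>R N A \<longleftrightarrow> A \<noteq> {} \<and> A \<subseteq> conf N \<and>
     (\<forall>x\<in>A. \<forall>y\<in>A. x \<noteq> y \<longrightarrow> calU \<kappa> \<mu>L \<mu>R N x y = 0) \<and>
     (\<forall>x\<in>A. \<forall>y\<in>conf N - A. calU \<kappa> \<mu>L \<mu>R N x y > 0)"

definition of_blocks :: "(nat \<times> nat) list \<Rightarrow> nat list" where
  "of_blocks bs = concat (map (\<lambda>(p, q). replicate p 1 @ replicate q 0) bs)"

definition calP :: "nat \<Rightarrow> nat list set" where
  "calP N = {x \<in> conf N. \<exists>bs. bs \<noteq> [] \<and> x = of_blocks bs \<and>
      (\<forall>i < length bs. fst (bs ! i) \<ge> 3) \<and>
      (\<forall>i < length bs - 1. snd (bs ! i) \<ge> 3) \<and>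
      snd (last bs) \<ge> 2}"

definition attr_set :: "real \<Rightarrow> real \<Rightarrow> real \<Rightarrow> nat \<Rightarrow> nat list \<Rightarrow> nat list set" where
  "attr_set \<kappa> \<mu>L \<mu>R N x = insert x {y. preferred_successor \<kappa> \<mu>L \<mu>R N x y}"

end

theory Submission
  imports Defs
begin

definition sw :: "nat list \<Rightarrow> nat \<Rightarrow> nat list" where
  "sw x k = x[k := x!(k+1), k+1 := x!k]"

lemma swap_jump_iff:
  "swap_jump N x w \<longleftrightarrow> (\<exists>k. k+1 < N \<and> x!k \<noteq> x!(k+1) \<and> w = sw x k)"
proof
  assume "swap_jump N x w"
  then obtain i j where h: "1 \<le> i" "i \<le> N" "1 \<le> j" "j \<le> N" "i = j + 1 \<or> j = i + 1"
     "occ x i \<noteq> occ x j" "w = swap x i j" unfolding swap_jump_def by blast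
  show "\<exists>k. k+1 < N \<and> x!k \<noteq> x!(k+1) \<and> w = sw x k"
  proof (cases "i = j + 1")
    case True
    then show ?thesis using h
      by (intro exI[of _ "j-1"]) (auto simp: swap_def sw_def occ_def list_update_swap)
  next
    case False
    then have "j = i + 1" using h by auto
    then show ?thesis using h
      by (intro exI[of _ "i-1"]) (auto simp: swap_def sw_def occ_def)
  qed
next
  assume "\<exists>k. k+1 < N \<and> x!k \<noteq> x!(k+1) \<and> w = sw x k"
  then obtain k where "k+1 < N" "x!k \<noteq> x!(k+1)" "w = sw x k" by blast
  then show "swap_jump N x w" unfolding swap_jump_def
    by (intro exI[of _ "k+1"] exI[of _ "k+2"]) (auto simp: swap_def sw_def occ_def)
qed

fun bl :: "nat list \<Rightarrow> nat" where
  "bl (a # b # xs) = a * b + bl (b # xs)"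
| "bl _ = 0"

lemma bl_sum: "bl x = (\<Sum>i<length x - 1. x!i * x!(i+1))"
proof (induction x rule: bl.induct)
  case (1 a b xs)
  have "(\<Sum>i<length (a#b#xs) - 1. (a#b#xs)!i * (a#b#xs)!(i+1))
      = (\<Sum>i<Suc (length (b#xs) - 1). (a#b#xs)!i * (a#b#xs)!(i+1))" by simp
  also have "\<dots> = a * b + (\<Sum>i<length (b#xs) - 1. (b#xs)!i * (b#xs)!(i+1))"
    by (subst sum.lessThan_Suc_shift) simp
  finally show ?case using 1 by simp
qed auto

lemma energy_bl:
  assumes "length x = N"
  shows "energy \<kappa> N x = - \<kappa> * real (bl x)"
proof -
  have "(\<Sum>i = 1..N - 1. real (occ x i * occ x (i + 1))) = (\<Sum>i<N - 1. real (x!i * x!(i+1)))"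
  proof -
    have "{1..N-1} = Suc ` {..<N-1}" by (auto simp: image_iff) (metis Suc_pred' less_Suc_eq_le not_less0 lessThan_iff le_less_Suc_eq Suc_le_eq diff_Suc_1 le_imp_less_Suc)
    then show ?thesis by (simp add: sum.reindex occ_def)
  qed
  then show ?thesis unfolding energy_def bl_sum using assms by simp
qed

lemma bl_Cons: "bl (a # w) = (case w of [] \<Rightarrow> 0 | b # _ \<Rightarrow> a * b) + bl w"
  by (cases w) auto

lemma bl_append: "bl (u @ w) = bl u + bl w + (if u = [] \<or> w = [] then 0 else last u * hd w)"
proof (induction u)
  case Nil then show ?case by simp
next
  case (Cons a u)
  show ?case
  proof (cases u)
    case Nil then show ?thesis by (cases w) auto
  next
    case (Cons b u')
    then show ?thesis using Cons.IH by (auto simp: bl_Cons split: list.splits)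
  qed
qed



definition dB :: "nat list \<Rightarrow> nat \<Rightarrow> int" where
  "dB z k = (int (z!(k+1)) - int (z!k)) *
     ((if k = 0 then 0 else int (z!(k-1))) - (if k+2 < length z then int (z!(k+2)) else 0))"

lemma sw_decomp:
  assumes "k+1 < length x"
  shows "x = take k x @ x!k # x!(k+1) # drop (k+2) x"
    and "sw x k = take k x @ x!(k+1) # x!k # drop (k+2) x"
proof -
  show 1: "x = take k x @ x!k # x!(k+1) # drop (k+2) x" using assms
    by (metis Cons_nth_drop_Suc Suc_eq_plus1 Suc_lessD add_Suc_right append_take_drop_id one_add_one plus_1_eq_Suc)
  have L: "length (take k x) = k" using assms by simp
  have "sw x k = (take k x @ x!k # x!(k+1) # drop (k+2) x)[k := x!(k+1), k+1 := x!k]"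
    unfolding sw_def using 1 by metis
  also have "\<dots> = take k x @ x!(k+1) # x!k # drop (k+2) x"
    using L by (simp add: list_update_append)
  finally show "sw x k = take k x @ x!(k+1) # x!k # drop (k+2) x" .
qed

lemma bl_mid: "int (bl (u @ p # q # v)) = int (bl u) + int (bl v) + int p * int q
   + (if u = [] then 0 else int (last u) * int p) + (if v = [] then 0 else int q * int (hd v))"
  by (simp add: bl_append bl_Cons split: list.splits)

lemma bl_sw:
  assumes "k+1 < length x"
  shows "int (bl (sw x k)) = int (bl x) + dB x k"
proof -
  let ?u = "take k x" and ?v = "drop (k+2) x"
  have lu: "?u \<noteq> [] \<Longrightarrow> last ?u = x!(k-1)" using assms
    by (simp add: last_conv_nth)
  have hv: "?v \<noteq> [] \<Longrightarrow> hd ?v = x!(k+2)" using assms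
    by (simp add: hd_drop_conv_nth)
  have e1: "?u = [] \<longleftrightarrow> k = 0" using assms by auto
  have e2: "?v = [] \<longleftrightarrow> \<not> k+2 < length x" by auto
  have h1: "bl (sw x k) = bl (?u @ x!(k+1) # x!k # ?v)" using sw_decomp(2)[OF assms] by simp
  have h2: "bl x = bl (?u @ x!k # x!(k+1) # ?v)" by (rule arg_cong[OF sw_decomp(1)[OF assms]])
  show ?thesis
    unfolding h1 h2 bl_mid
    using lu hv e1 e2 by (auto simp: dB_def algebra_simps)
qed

lemma bl_upd0:
  assumes "2 \<le> length z"
  shows "int (bl (z[0 := a])) = int (bl z) + (int a - int (z!0)) * int (z!1)"
proof -
  obtain p q v where z: "z = p # q # v" using assms by (cases z; cases "tl z") auto
  show ?thesis unfolding z by (simp add: algebra_simps)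
qed

lemma bl_updlast:
  assumes "2 \<le> length z" "length z = N"
  shows "int (bl (z[N-1 := a])) = int (bl z) + (int a - int (z!(N-1))) * int (z!(N-2))"
proof -
  obtain u p where z: "z = u @ [p]" using assms by (metis append_butlast_last_id list.size(3) not_numeral_le_zero)
  have u: "u \<noteq> []" "length u = N - 1" using assms z by auto
  have "N - 1 = length u" using u by simp
  then have "z[N-1 := a] = u @ [a]" using z by simp
  moreover have "z!(N-1) = p" "z!(N-2) = last u" using z u assms
    by (auto simp: nth_append last_conv_nth numeral_2_eq_2)
  ultimately show ?thesis using z u by (simp add: bl_append algebra_simps)
qed



lemma conf_nth: "x \<in> conf N \<Longrightarrow> i < N \<Longrightarrow> x!i \<le> 1"
  unfolding conf_def using nth_mem by fastforce

lemma conf_len: "x \<in> conf N \<Longrightarrow> length x = N"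
  unfolding conf_def by simp

lemma flip1_eq: "flip x 1 = x[0 := 1 - x!0]" by (simp add: flip_def occ_def)
lemma flipN_eq: "flip x N = x[N-1 := 1 - x!(N-1)]" by (simp add: flip_def occ_def)

lemma conf_upd: "x \<in> conf N \<Longrightarrow> v \<le> 1 \<Longrightarrow> x[i := v] \<in> conf N"
  unfolding conf_def using set_update_subset_insert[of x i v] by auto

lemma conf_sw: assumes "x \<in> conf N" "k+1 < N" shows "sw x k \<in> conf N"
proof -
  have "x!k \<le> 1" "x!(k+1) \<le> 1" using conf_nth assms by auto
  then show ?thesis unfolding sw_def by (intro conf_upd assms) auto
qed

lemma conf_flip1: "x \<in> conf N \<Longrightarrow> flip x 1 \<in> conf N"
  unfolding flip1_eq by (intro conf_upd) auto
lemma conf_flipN: "x \<in> conf N \<Longrightarrow> flip x N \<in> conf N"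
  unfolding flipN_eq by (intro conf_upd) auto

lemma jump_conf: "jump N a b \<Longrightarrow> a \<in> conf N \<and> b \<in> conf N"
  unfolding jump_def swap_jump_iff using conf_sw conf_flip1 conf_flipN by blast

lemma adj_conf: "adjacent N a b \<Longrightarrow> a \<in> conf N \<and> b \<in> conf N"
  unfolding adjacent_def using jump_conf by blast

lemma sw_sw: "k+1 < length x \<Longrightarrow> sw (sw x k) k = x"
  unfolding sw_def by (auto intro!: nth_equalityI simp: nth_list_update)

lemma sw_nth: "k+1 < length x \<Longrightarrow> sw x k ! k = x!(k+1) \<and> sw x k ! (k+1) = x!k \<and>
   (\<forall>i. i \<noteq> k \<and> i \<noteq> k+1 \<longrightarrow> sw x k ! i = x ! i)"
  unfolding sw_def by (auto simp: nth_list_update)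

lemma length_sw[simp]: "length (sw x k) = length x" by (simp add: sw_def)

lemma flip_flip1:
  assumes "w \<in> conf N" "N \<ge> 2" shows "flip (flip w 1) 1 = w"
proof -
  have "w!0 \<le> 1" "length w = N" using assms conf_nth conf_len by auto
  then show ?thesis unfolding flip1_eq using assms by (auto intro!: nth_equalityI simp: nth_list_update)
qed

lemma flip_flipN:
  assumes "w \<in> conf N" "N \<ge> 2" shows "flip (flip w N) N = w"
proof -
  have "w!(N-1) \<le> 1" "length w = N" using assms conf_nth conf_len by auto
  then show ?thesis unfolding flipN_eq using assms by (auto intro!: nth_equalityI simp: nth_list_update)
qed

lemma adj_iff:
  assumes "x \<in> conf N" "N \<ge> 2"
  shows "adjacent N x w \<longleftrightarrow> (w = flip x 1 \<or> w = flip x N \<or> (\<exists>k. k+1<N \<and> x!k \<noteq> x!(k+1) \<and> w = sw x k))"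
proof
  assume "adjacent N x w"
  then consider "jump N x w" | "jump N w x" unfolding adjacent_def by blast
  then show "w = flip x 1 \<or> w = flip x N \<or> (\<exists>k. k+1<N \<and> x!k \<noteq> x!(k+1) \<and> w = sw x k)"
  proof cases
    case 1 then show ?thesis unfolding jump_def swap_jump_iff by blast
  next
    case 2
    then have wc: "w \<in> conf N" unfolding jump_def by blast
    have lw: "length w = N" using wc conf_len by blast
    from 2 consider "swap_jump N w x" | "x = flip w 1" | "x = flip w N" unfolding jump_def by blast
    then show ?thesis
    proof cases
      case 1
      then obtain k where k: "k+1 < N" "w!k \<noteq> w!(k+1)" "x = sw w k" unfolding swap_jump_iff by blast
      then have "w = sw x k" using sw_sw lw by auto
      moreover have "x!k \<noteq> x!(k+1)" using k sw_nth[of k w] lw by auto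
      ultimately show ?thesis using k by blast
    qed (use flip_flip1 flip_flipN wc assms in auto)
  qed
next
  assume "w = flip x 1 \<or> w = flip x N \<or> (\<exists>k. k+1<N \<and> x!k \<noteq> x!(k+1) \<and> w = sw x k)"
  then show "adjacent N x w" unfolding adjacent_def jump_def swap_jump_iff using assms by blast
qed

lemma finite_conf: "finite (conf N)"
proof -
  have "conf N \<subseteq> {xs. set xs \<subseteq> {0,1} \<and> length xs = N}" unfolding conf_def by auto
  moreover have "finite {xs. set xs \<subseteq> ({0,1}::nat set) \<and> length xs = N}"
    by (rule finite_lists_length_eq) simp
  ultimately show ?thesis by (rule finite_subset)
qed

lemma finite_adj: "finite {y. adjacent N a y}"
  using adj_conf finite_conf by (metis (no_types, lifting) finite_subset mem_Collect_eq subsetI)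

lemma phi_const:
  assumes "\<And>\<beta>. \<beta> > 0 \<Longrightarrow> rate \<kappa> \<mu>L \<mu>R N \<beta> x y = exp (\<beta> * c)"
  shows "phi \<kappa> \<mu>L \<mu>R N x y = c"
proof -
  have "eventually (\<lambda>\<beta>. (1 / \<beta>) * ln (rate \<kappa> \<mu>L \<mu>R N \<beta> x y) = c) at_top"
    using eventually_gt_at_top[of "0::real"]
    by eventually_elim (simp add: assms)
  then have "((\<lambda>\<beta>. (1 / \<beta>) * ln (rate \<kappa> \<mu>L \<mu>R N \<beta> x y)) \<longlongrightarrow> c) at_top"
    by (rule tendsto_eventually)
  then show ?thesis unfolding phi_def by (rule tendsto_Lim[rotated]) simp
qed

lemma not_swap_flip1:
  assumes "length x = N" "N \<ge> 2" "x!0 \<le> 1" shows "\<not> swap_jump N x (flip x 1)"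
proof
  assume "swap_jump N x (flip x 1)"
  then obtain k where k: "k+1 < N" "x!k \<noteq> x!(k+1)" "flip x 1 = sw x k" unfolding swap_jump_iff by blast
  have "flip x 1 ! (k+1) = x!(k+1)" unfolding flip1_eq by simp
  moreover have "sw x k ! (k+1) = x!k" using sw_nth[of k x] k assms by auto
  ultimately show False using k by simp
qed

lemma not_swap_flipN:
  assumes "length x = N" "N \<ge> 2" shows "\<not> swap_jump N x (flip x N)"
proof
  assume "swap_jump N x (flip x N)"
  then obtain k where k: "k+1 < N" "x!k \<noteq> x!(k+1)" "flip x N = sw x k" unfolding swap_jump_iff by blast
  have "flip x N ! k = x!k" unfolding flipN_eq using k by simp
  moreover have "sw x k ! k = x!(k+1)" using sw_nth[of k x] k assms by auto
  ultimately show False using k by simp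
qed

lemma flipN_ne_flip1:
  assumes "length x = N" "N \<ge> 2" "x!0 \<le> 1" shows "flip x N \<noteq> flip x 1"
proof
  assume "flip x N = flip x 1"
  then have "flip x N ! 0 = flip x 1 ! 0" by simp
  then show False unfolding flipN_eq flip1_eq using assms by (auto simp: nth_list_update; presburger)
qed

lemma phi_sw:
  assumes "x \<in> conf N" "k+1 < N" "x!k \<noteq> x!(k+1)"
  shows "phi \<kappa> \<mu>L \<mu>R N x (sw x k) = \<kappa> / 2 * real_of_int (dB x k)"
proof (rule phi_const)
  fix \<beta> :: real
  have sj: "swap_jump N x (sw x k)" unfolding swap_jump_iff using assms by blast
  have l: "length x = N" "length (sw x k) = N" using assms conf_len by auto
  have e: "real (bl (sw x k)) = real (bl x) + real_of_int (dB x k)"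
    using bl_sw[of k x] l assms by (metis of_int_add of_int_of_nat_eq)
  show "rate \<kappa> \<mu>L \<mu>R N \<beta> x (sw x k) = exp (\<beta> * (\<kappa> / 2 * real_of_int (dB x k)))"
    unfolding rate_def using sj l by (simp add: energy_bl e algebra_simps)
qed

lemma phi_flip1:
  assumes "x \<in> conf N" "N \<ge> 2"
  shows "phi \<kappa> \<mu>L \<mu>R N x (flip x 1) = \<mu>L / 2 * (1 - 2 * real (x!0))
     + \<kappa> / 2 * ((1 - 2 * real (x!0)) * real (x!1))"
proof (rule phi_const)
  fix \<beta> :: real
  have l: "length x = N" "length (flip x 1) = N" using assms conf_len conf_flip1 by auto
  have x0: "x!0 \<le> 1" using assms conf_nth by auto
  have e: "real (bl (flip x 1)) = real (bl x) + (1 - 2 * real (x!0)) * real (x!1)"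
  proof -
    have "int (bl (flip x 1)) = int (bl x) + (int (1 - x!0) - int (x!0)) * int (x!1)"
      unfolding flip1_eq using bl_upd0 l assms by auto
    then have "real (bl (flip x 1)) = real (bl x) + (real (1 - x!0) - real (x!0)) * real (x!1)"
      by (metis (mono_tags, opaque_lifting) of_int_add of_int_diff of_int_mult of_int_of_nat_eq)
    then show ?thesis using x0 by (simp add: of_nat_diff)
  qed
  show "rate \<kappa> \<mu>L \<mu>R N \<beta> x (flip x 1) = exp (\<beta> * (\<mu>L / 2 * (1 - 2 * real (x!0))
     + \<kappa> / 2 * ((1 - 2 * real (x!0)) * real (x!1))))"
    unfolding rate_def using not_swap_flip1[OF l(1) assms(2) x0] l
    by (simp add: energy_bl e e[simplified One_nat_def] occ_def algebra_simps mult_exp_exp)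
qed

lemma phi_flipN:
  assumes "x \<in> conf N" "N \<ge> 2"
  shows "phi \<kappa> \<mu>L \<mu>R N x (flip x N) = \<mu>R / 2 * (1 - 2 * real (x!(N-1)))
     + \<kappa> / 2 * ((1 - 2 * real (x!(N-1))) * real (x!(N-2)))"
proof (rule phi_const)
  fix \<beta> :: real
  have l: "length x = N" "length (flip x N) = N" using assms conf_len conf_flipN by auto
  have x0: "x!0 \<le> 1" "x!(N-1) \<le> 1" using assms conf_nth by auto
  have e: "real (bl (flip x N)) = real (bl x) + (1 - 2 * real (x!(N-1))) * real (x!(N-2))"
  proof -
    have "int (bl (flip x N)) = int (bl x) + (int (1 - x!(N-1)) - int (x!(N-1))) * int (x!(N-2))"
      unfolding flipN_eq using bl_updlast l assms by auto
    then have "real (bl (flip x N)) = real (bl x) + (real (1 - x!(N-1)) - real (x!(N-1))) * real (x!(N-2))"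
      by (metis (mono_tags, opaque_lifting) of_int_add of_int_diff of_int_mult of_int_of_nat_eq)
    then show ?thesis using x0 by (simp add: of_nat_diff)
  qed
  show "rate \<kappa> \<mu>L \<mu>R N \<beta> x (flip x N) = exp (\<beta> * (\<mu>R / 2 * (1 - 2 * real (x!(N-1)))
     + \<kappa> / 2 * ((1 - 2 * real (x!(N-1))) * real (x!(N-2)))))"
    unfolding rate_def using not_swap_flipN[OF l(1) assms(2)] flipN_ne_flip1[OF l(1) assms(2) x0(1)] l
    by (simp add: energy_bl e e[simplified One_nat_def] occ_def algebra_simps mult_exp_exp)
qed



fun good :: "nat list \<Rightarrow> bool" where
  "good (a#b#c#d#xs) = ((a = b \<or> b = c) \<and> (a = b \<or> c = d) \<and> good (b#c#d#xs))"
| "good [a,b,c] = (a = b \<or> b = c)"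
| "good _ = True"

lemma good_nth1: "good z \<Longrightarrow> i+2 < length z \<Longrightarrow> z!i = z!(i+1) \<or> z!(i+1) = z!(i+2)"
proof (induction z arbitrary: i rule: good.induct)
  case (1 a b c d xs)
  then show ?case by (cases i) auto
next
  case (2 a b c)
  then show ?case by (cases i) auto
qed auto

lemma good_nth2: "good z \<Longrightarrow> i+3 < length z \<Longrightarrow> z!i = z!(i+1) \<or> z!(i+2) = z!(i+3)"
proof (induction z arbitrary: i rule: good.induct)
  case (1 a b c d xs)
  then show ?case by (cases i) auto
qed auto

lemma good_cons3: "good (c#c#s) \<Longrightarrow> good (c#c#c#s)"
  by (cases s rule: good.cases) auto

lemma good_rep: "good (c#c#s) \<Longrightarrow> good (c#c#(replicate n c @ s))"
proof (induction n)
  case (Suc n)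
  then have "good (c#c#c#(replicate n c @ s))" by (intro good_cons3)
  then show ?case by simp
qed simp

lemma rep3: "q \<ge> 3 \<Longrightarrow> replicate q c @ r = c#c#(replicate (q-3) c @ c # r)"
proof -
  assume "q \<ge> 3"
  then obtain q' where "q = q' + 3" by (metis add.commute le_add_diff_inverse)
  then show ?thesis by (simp add: numeral_3_eq_3 replicate_app_Cons_same)
qed

definition valid :: "(nat \<times> nat) list \<Rightarrow> bool" where
  "valid bs \<longleftrightarrow> bs \<noteq> [] \<and> (\<forall>i < length bs. fst (bs ! i) \<ge> 3) \<and>
      (\<forall>i < length bs - 1. snd (bs ! i) \<ge> 3) \<and> snd (last bs) \<ge> 2"

lemma of_blocks_Cons: "of_blocks ((p,q)#bs) = replicate p 1 @ replicate q 0 @ of_blocks bs"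
  by (simp add: of_blocks_def)

lemma good_blocks: "valid bs \<Longrightarrow> good (of_blocks bs) \<and> (\<exists>t. of_blocks bs = 1#1#1#t)"
proof (induction bs)
  case Nil then show ?case by (simp add: valid_def)
next
  case (Cons b bs)
  obtain p q where b: "b = (p,q)" by fastforce
  have p: "p \<ge> 3" using Cons.prems b unfolding valid_def by (auto dest!: spec[of _ 0])
  show ?case
  proof (cases "bs = []")
    case True
    then have q: "q \<ge> 2" using Cons.prems b unfolding valid_def by simp
    obtain q' where q': "q = Suc (Suc q')" using q by (metis add_2_eq_Suc le_iff_add add.commute)
    have g0: "good (0#0#(replicate q' 0 @ []))" by (rule good_rep) simp
    have "good (1#0#0#replicate q' 0)" using g0 by (cases q') auto
    then have "good (1#1#1#0#0#replicate q' 0)" by simp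
    then have "good (1#1#(replicate (p-3) 1 @ 1#0#0#replicate q' 0))" by (intro good_rep) simp
    moreover have "of_blocks (b#bs) = replicate p 1 @ (0#0#replicate q' 0)"
      using True b q' by (simp add: of_blocks_Cons of_blocks_def)
    moreover have "replicate p 1 @ (0#0#replicate q' 0) = 1#1#(replicate (p-3) 1 @ 1#0#0#replicate q' (0::nat))"
      by (rule rep3[OF p])
    ultimately show ?thesis by (metis replicate_app_Cons_same)
  next
    case False
    have V: "\<forall>i < length (b#bs). fst ((b#bs) ! i) \<ge> 3" "\<forall>i < length (b#bs) - 1. snd ((b#bs) ! i) \<ge> 3"
      "snd (last (b#bs)) \<ge> 2" using Cons.prems unfolding valid_def by blast+
    have v: "valid bs" unfolding valid_def
    proof (intro conjI allI impI)
      show "bs \<noteq> []" by fact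
      fix i assume "i < length bs" then show "fst (bs ! i) \<ge> 3" using V(1)[rule_format, of "Suc i"] by simp
    next
      fix i assume "i < length bs - 1" then show "snd (bs ! i) \<ge> 3" using V(2)[rule_format, of "Suc i"] by simp
    next
      show "snd (last bs) \<ge> 2" using V(3) False by simp
    qed
    have q: "q \<ge> 3" using V(2)[rule_format, of 0] False b by simp
    obtain t where t: "of_blocks bs = 1#1#1#t" "good (1#1#1#t)" using Cons.IH v by auto
    have "good (0#0#0#1#1#1#t)" using t(2) by simp
    then have "good (0#0#(replicate (q-3) 0 @ 0#1#1#1#t))" by (intro good_rep) simp
    moreover have "replicate q 0 @ (1#1#1#t) = 0#0#(replicate (q-3) 0 @ 0#1#1#1#t)" by (rule rep3[OF q])
    ultimately have g: "good (replicate q 0 @ 1#1#1#t)" by simp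
    obtain q' where q': "q = q' + 3" using q by (metis add.commute le_add_diff_inverse)
    obtain w where w: "replicate q 0 @ 1#1#1#t = 0#0#0#w" unfolding q' by (simp add: numeral_3_eq_3)
    have "good (1#1#1#0#0#0#w)" using g w by simp
    then have "good (1#1#(replicate (p-3) 1 @ 1#0#0#0#w))" by (intro good_rep) simp
    moreover have "of_blocks (b#bs) = replicate p 1 @ (0#0#0#w)"
      using b t w by (simp add: of_blocks_Cons)
    moreover have "replicate p 1 @ (0#0#0#w) = 1#1#(replicate (p-3) 1 @ 1#0#0#0#w)"
      by (rule rep3[OF p])
    ultimately show ?thesis by (metis replicate_app_Cons_same)
  qed
qed

lemma blocks_end: "valid bs \<Longrightarrow> \<exists>u. of_blocks bs = u @ [0,0]"
proof -
  assume v: "valid bs"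
  then have ne: "bs \<noteq> []" unfolding valid_def by simp
  obtain p q where l: "last bs = (p,q)" by fastforce
  have q: "q \<ge> 2" using v l unfolding valid_def by simp
  have "of_blocks bs = of_blocks (butlast bs @ [last bs])" using ne by simp
  also have "\<dots> = of_blocks (butlast bs) @ replicate p 1 @ replicate q 0"
    unfolding l by (simp add: of_blocks_def)
  also have "replicate q (0::nat) = replicate (q-2) 0 @ [0,0]"
  proof -
    obtain q' where "q = q' + 2" using q by (metis add.commute le_add_diff_inverse)
    then show ?thesis by (simp only: replicate_add) (simp add: numeral_2_eq_2)
  qed
  finally show ?thesis by auto
qed

lemma calP_props:
  assumes "x \<in> calP N" "N \<ge> 3"
  shows "x \<in> conf N" "x!0 = 1" "x!1 = 1" "x!2 = 1" "x!(N-1) = 0" "x!(N-2) = 0"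
    "\<And>i. i+2 < N \<Longrightarrow> x!i = x!(i+1) \<or> x!(i+1) = x!(i+2)"
    "\<And>i. i+3 < N \<Longrightarrow> x!i = x!(i+1) \<or> x!(i+2) = x!(i+3)"
proof -
  show xc: "x \<in> conf N" using assms unfolding calP_def by auto
  have l: "length x = N" using xc conf_len by auto
  obtain bs where bs: "valid bs" "x = of_blocks bs" using assms unfolding calP_def valid_def by blast
  obtain t where t: "x = 1#1#1#t" "good x" using good_blocks[OF bs(1)] bs(2) by auto
  obtain u where u: "x = u @ [0,0]" using blocks_end[OF bs(1)] bs(2) by auto
  show "x!0 = 1" "x!1 = 1" "x!2 = 1" using t by auto
  have lu: "length u = N - 2" using u l by simp
  show "x!(N-1) = 0" "x!(N-2) = 0" using u lu assms(2) by (auto simp: nth_append)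
  show "\<And>i. i+2 < N \<Longrightarrow> x!i = x!(i+1) \<or> x!(i+1) = x!(i+2)" using good_nth1 t(2) l by auto
  show "\<And>i. i+3 < N \<Longrightarrow> x!i = x!(i+1) \<or> x!(i+2) = x!(i+3)" using good_nth2 t(2) l by auto
qed



lemma phi_set_finite: "finite {phi \<kappa> \<mu>L \<mu>R N a y | y. adjacent N a y}"
proof -
  have "{phi \<kappa> \<mu>L \<mu>R N a y | y. adjacent N a y} = phi \<kappa> \<mu>L \<mu>R N a ` {y. adjacent N a y}" by auto
  then show ?thesis using finite_adj by simp
qed

lemma Max_phi:
  assumes "\<And>w. adjacent N a w \<Longrightarrow> phi \<kappa> \<mu>L \<mu>R N a w \<le> v" "adjacent N a w0" "phi \<kappa> \<mu>L \<mu>R N a w0 = v"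
  shows "Gamma \<kappa> \<mu>L \<mu>R N a = - v"
  unfolding Gamma_def
  by (rule arg_cong[where f=uminus], rule Max_eqI[OF phi_set_finite]) (use assms in auto)

lemma U_nonneg:
  assumes "adjacent N a b" shows "Ucost \<kappa> \<mu>L \<mu>R N a b \<ge> 0"
proof -
  have "phi \<kappa> \<mu>L \<mu>R N a b \<le> Max {phi \<kappa> \<mu>L \<mu>R N a y | y. adjacent N a y}"
    by (rule Max_ge[OF phi_set_finite]) (use assms in auto)
  then show ?thesis unfolding Ucost_def Gamma_def by simp
qed

definition bd :: "nat list \<Rightarrow> nat \<Rightarrow> bool" where
  "bd z k \<longleftrightarrow> k + 1 < length z \<and> z!k \<noteq> z!(k+1)"

lemma exists_bd: "n < length z \<Longrightarrow> z!0 \<noteq> z!n \<Longrightarrow> \<exists>k. bd z k"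
proof (induction n)
  case 0 then show ?case by simp
next
  case (Suc n)
  show ?case
  proof (cases "z!0 = z!n")
    case True
    then have "z!n \<noteq> z!(n+1)" using Suc.prems by simp
    then show ?thesis using Suc.prems unfolding bd_def by auto
  next
    case False then show ?thesis using Suc by simp
  qed
qed

locale setting =
  fixes N :: nat and \<kappa> \<mu>L \<mu>R :: real
  assumes N5: "N \<ge> 5" and muL: "\<mu>L > \<kappa>" and kpos: "\<kappa> > 0" and muR: "\<mu>R < - \<kappa>"
begin

abbreviation "ph \<equiv> phi \<kappa> \<mu>L \<mu>R N"
abbreviation "UU \<equiv> Ucost \<kappa> \<mu>L \<mu>R N"
abbreviation "GG \<equiv> Gamma \<kappa> \<mu>L \<mu>R N"

definition "cc = min (\<kappa>/2) (-(\<mu>R+\<kappa>)/2)"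

lemma cc_pos: "cc > 0" unfolding cc_def using kpos muR by simp

context
  fixes x assumes xP: "x \<in> calP N"
begin

lemma xc: "x \<in> conf N" and x0: "x!0 = 1" and x1: "x!1 = 1" and x2: "x!2 = 1"
  and xN1: "x!(N-1) = 0" and xN2: "x!(N-2) = 0"
  and xw1: "\<And>i. i+2 < N \<Longrightarrow> x!i = x!(i+1) \<or> x!(i+1) = x!(i+2)"
  and xw2: "\<And>i. i+3 < N \<Longrightarrow> x!i = x!(i+1) \<or> x!(i+2) = x!(i+3)"
  using calP_props[OF xP] N5 by auto

lemma xl: "length x = N" using xc conf_len by auto

lemma bdx:
  assumes "bd x k"
  shows "2 \<le> k" "k + 2 < N" "x!(k-1) = x!k" "x!(k+2) = x!(k+1)" "x!k \<le> 1" "x!(k+1) \<le> 1"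
proof -
  have k: "k+1 < N" "x!k \<noteq> x!(k+1)" using assms xl unfolding bd_def by auto
  show "2 \<le> k" using k x0 x1 x2 by (cases k; cases "k - 1") (auto simp: numeral_2_eq_2)
  show "k + 2 < N"
  proof (rule ccontr)
    assume "\<not> k + 2 < N"
    then have "k = N - 2" "k + 1 = N - 1" using k(1) by auto
    then show False using k(2) xN1 xN2 by simp
  qed
  show "x!(k-1) = x!k" using xw1[of "k-1"] k \<open>2 \<le> k\<close> by auto
  show "x!(k+2) = x!(k+1)" using xw1[of k] k \<open>k+2 < N\<close> by auto
  show "x!k \<le> 1" "x!(k+1) \<le> 1" using conf_nth[OF xc] k by auto
qed

lemma dB_x: assumes "bd x k" shows "dB x k = -1"
proof -
  note b = bdx[OF assms]
  have ne: "x!k \<noteq> x!(k+1)" using assms unfolding bd_def by auto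
  have "dB x k = (int (x!(k+1)) - int (x!k)) * (int (x!k) - int (x!(k+1)))"
    unfolding dB_def using b xl by auto
  moreover have "x!k = 0 \<and> x!(k+1) = 1 \<or> x!k = 1 \<and> x!(k+1) = 0" using b(5,6) ne by auto
  ultimately show ?thesis by auto
qed

lemma adj_x_iff: "adjacent N x w \<longleftrightarrow> (w = flip x 1 \<or> w = flip x N \<or> (\<exists>k. bd x k \<and> w = sw x k))"
  using adj_iff[OF xc, of w] N5 xl unfolding bd_def by auto

lemma phi_x_sw: "bd x k \<Longrightarrow> ph x (sw x k) = - \<kappa> / 2"
  using phi_sw[OF xc, of k] dB_x[of k] unfolding bd_def using xl by auto

lemma phi_x_flip1: "ph x (flip x 1) = - \<mu>L / 2 - \<kappa> / 2"
  using phi_flip1[OF xc] N5 x0 x1 by simp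

lemma phi_x_flipN: "ph x (flip x N) = \<mu>R / 2"
  using phi_flipN[OF xc] N5 xN1 xN2 by simp

lemma ex_bd_x: "\<exists>k. bd x k"
  using exists_bd[of "N-1" x] xl x0 xN1 N5 by auto

lemma Gamma_x: "GG x = \<kappa> / 2"
proof -
  obtain k where k: "bd x k" using ex_bd_x by blast
  have "GG x = - (- \<kappa> / 2)"
  proof (rule Max_phi)
    fix w assume "adjacent N x w"
    then show "ph x w \<le> - \<kappa> / 2" unfolding adj_x_iff
      using phi_x_sw phi_x_flip1 phi_x_flipN muL kpos muR by auto
  next
    show "adjacent N x (sw x k)" using adj_x_iff k by auto
    show "ph x (sw x k) = - \<kappa> / 2" using phi_x_sw k by auto
  qed
  then show ?thesis by simp
qed

lemma U_x: "adjacent N x w \<Longrightarrow> UU x w = - ph x w - \<kappa> / 2"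
  unfolding Ucost_def Gamma_x by simp

lemma pref_x_iff: "preferred_successor \<kappa> \<mu>L \<mu>R N x w \<longleftrightarrow> (\<exists>k. bd x k \<and> w = sw x k)"
proof
  assume "preferred_successor \<kappa> \<mu>L \<mu>R N x w"
  then have a: "adjacent N x w" "UU x w = 0" unfolding preferred_successor_def by auto
  then have "ph x w = - \<kappa> / 2" using U_x by simp
  then show "\<exists>k. bd x k \<and> w = sw x k" using a(1) unfolding adj_x_iff
    using phi_x_flip1 phi_x_flipN muL kpos muR by auto
next
  assume "\<exists>k. bd x k \<and> w = sw x k"
  then obtain k where k: "bd x k" "w = sw x k" by blast
  then show "preferred_successor \<kappa> \<mu>L \<mu>R N x w"
  proof -
    have a: "adjacent N x w" using adj_x_iff k by auto
    then have "UU x w = 0" using U_x[OF a] phi_x_sw[OF k(1)] k(2) by simp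
    then show ?thesis using a unfolding preferred_successor_def by simp
  qed
qed

lemma U_x_out: assumes "adjacent N x w" "\<not> (\<exists>k. bd x k \<and> w = sw x k)" shows "UU x w \<ge> cc"
proof -
  have "w = flip x 1 \<or> w = flip x N" using assms adj_x_iff by auto
  then have "UU x w = \<mu>L / 2 \<or> UU x w = - \<mu>R / 2 - \<kappa> / 2"
    using U_x[OF assms(1)] phi_x_flip1 phi_x_flipN by auto
  then show ?thesis unfolding cc_def using muL kpos muR by (auto simp: min_def field_simps)
qed

end

end



context setting begin

context
  fixes x k assumes xP: "x \<in> calP N" and kb: "bd x k"
begin

abbreviation "y \<equiv> sw x k"

lemma yfacts:
  shows "length y = N" "y \<in> conf N" "y!k = x!(k+1)" "y!(k+1) = x!k"
    "\<And>i. i \<noteq> k \<Longrightarrow> i \<noteq> k+1 \<Longrightarrow> y!i = x!i"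
    "y!0 = 1" "y!1 = 1" "y!(N-1) = 0" "sw y k = x" "y!k \<noteq> y!(k+1)"
proof -
  note b = bdx[OF xP kb]
  have xl: "length x = N" using xl[OF xP] .
  have k1: "k+1 < N" using b by auto
  show "length y = N" using xl by simp
  show "y \<in> conf N" using conf_sw[OF xc[OF xP] k1] .
  note v = sw_nth[of k x, unfolded xl, OF k1]
  show "y!k = x!(k+1)" "y!(k+1) = x!k" using v by auto
  show yi: "\<And>i. i \<noteq> k \<Longrightarrow> i \<noteq> k+1 \<Longrightarrow> y!i = x!i" using v by auto
  show "y!0 = 1" using yi[of 0] b x0[OF xP] by auto
  show "y!1 = 1" using yi[of 1] b x1[OF xP] by auto
  show "y!(N-1) = 0" using yi[of "N-1"] b xN1[OF xP] by auto
  show "sw y k = x" using sw_sw[of k x] xl k1 by simp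
  show "y!k \<noteq> y!(k+1)" using v kb unfolding bd_def by auto
qed

lemma dB_y: "dB y k = 1"
proof -
  have k1: "k+1 < N" using bdx[OF xP kb] by auto
  have "int (bl (sw y k)) = int (bl y) + dB y k" using bl_sw[of k y] k1 yfacts(1) by simp
  moreover have "int (bl y) = int (bl x) + dB x k" using bl_sw[of k x] k1 xl[OF xP] by simp
  ultimately show ?thesis using dB_x[OF xP kb] yfacts(9) by simp
qed

lemma phi_y_x: "ph y x = \<kappa> / 2"
proof -
  have k1: "k+1 < N" using bdx[OF xP kb] by auto
  have "ph y (sw y k) = \<kappa> / 2 * real_of_int (dB y k)"
    by (rule phi_sw[OF yfacts(2) k1 yfacts(10)])
  then show ?thesis using dB_y yfacts(9) by simp
qed

lemma adj_y_x: "adjacent N y x"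
proof -
  have k1: "k+1 < N" using bdx[OF xP kb] by auto
  then have "\<exists>m. m+1<N \<and> y!m \<noteq> y!(m+1) \<and> x = sw y m" using yfacts(9,10) by metis
  then show ?thesis using adj_iff[OF yfacts(2), of x] N5 by auto
qed

lemma dB_y_le:
  assumes m: "m+1 < N" "y!m \<noteq> y!(m+1)" "m \<noteq> k"
  shows "dB y m \<le> 0"
proof (rule ccontr)
  assume "\<not> dB y m \<le> 0"
  then have pos: "dB y m \<ge> 1" by simp
  note b = bdx[OF xP kb]
  note yv = yfacts(5)
  have ylt: "\<And>i. i < N \<Longrightarrow> y!i \<le> 1" using conf_nth[OF yfacts(2)] by auto
  have xlt: "\<And>i. i < N \<Longrightarrow> x!i \<le> 1" using conf_nth[OF xc[OF xP]] by auto
  have m0: "m \<noteq> 0"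
  proof
    assume "m = 0"
    then show False using m yfacts(6,7) by simp
  qed
  have m2: "m + 2 < N"
  proof (rule ccontr)
    assume "\<not> m + 2 < N"
    then have "m + 1 = N - 1" using m by auto
    then have "dB y m = (0 - int (y!m)) * (int (y!(m-1)) - 0)"
      unfolding dB_def using yfacts(1,8) m0 \<open>\<not> m + 2 < N\<close> by auto
    also have "\<dots> \<le> 0" by (simp add: mult_nonneg_nonneg)
    finally show False using pos by simp
  qed
  have dBm: "dB y m = (int (y!(m+1)) - int (y!m)) * (int (y!(m-1)) - int (y!(m+2)))"
    unfolding dB_def using yfacts(1) m0 m2 by auto
  have "y!(m-1) \<noteq> y!m \<and> y!(m+1) \<noteq> y!(m+2)"
  proof -
    have "y!(m-1) \<le> 1" "y!m \<le> 1" "y!(m+1) \<le> 1" "y!(m+2) \<le> 1" using ylt m m2 by auto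
    then show ?thesis using pos dBm
      by (cases "y!(m-1)"; cases "y!m"; cases "y!(m+1)"; cases "y!(m+2)") auto
  qed
  then have B1: "y!(m-1) \<noteq> y!m" and B2: "y!m \<noteq> y!(m+1)" and B3: "y!(m+1) \<noteq> y!(m+2)"
    using m by auto
  consider "m \<ge> k + 2" | "m = k + 1" | "m + 1 = k" | "m + 2 \<le> k" using m(3) by linarith
  then show False
  proof cases
    case 1
    then have "x!m \<noteq> x!(m+1)" "x!(m+1) \<noteq> x!(m+2)" using B2 B3 yv[of m] yv[of "m+1"] yv[of "m+2"] by auto
    then show False using xw1[OF xP, of m] m2 by auto
  next
    case 2
    then have "x!(k+2) \<noteq> x!(k+3)" using B3 yv[of "k+2"] yv[of "k+3"] by (auto simp: numeral_3_eq_3)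
    moreover have "x!k \<noteq> x!(k+1)" using kb unfolding bd_def by auto
    ultimately show False using xw2[OF xP, of k] m2 2 by (auto simp: numeral_3_eq_3)
  next
    case 3
    then have "x!(m-1) \<noteq> x!m" using B1 yv[of "m-1"] yv[of m] by auto
    moreover have "x!(m+1) \<noteq> x!(m+2)" using kb 3 unfolding bd_def by auto
    ultimately show False using xw2[OF xP, of "m-1"] m0 m2 3 by auto
  next
    case 4
    then have "x!(m-1) \<noteq> x!m" "x!m \<noteq> x!(m+1)" using B1 B2 yv[of "m-1"] yv[of m] yv[of "m+1"] by auto
    then show False using xw1[OF xP, of "m-1"] m0 m2 by auto
  qed
qed


lemma phi_y_le:
  assumes "adjacent N y w" "w \<noteq> x"
  shows "ph y w \<le> 0"
proof -
  have yc: "y \<in> conf N" using yfacts(2) .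
  consider "w = flip y 1" | "w = flip y N" | m where "m+1 < N" "y!m \<noteq> y!(m+1)" "w = sw y m"
    using adj_iff[OF yc, of w] N5 assms(1) by auto
  then show ?thesis
  proof cases
    case 1
    then show ?thesis using phi_flip1[OF yc, of \<kappa> \<mu>L \<mu>R] N5 yfacts(6,7) muL kpos by simp
  next
    case 2
    have "y!(N-2) \<le> 1" using conf_nth[OF yc, of "N-2"] N5 by auto
    then have "\<kappa> / 2 * real (y!(N-2)) \<le> \<kappa> / 2" using kpos by simp
    then show ?thesis using 2 phi_flipN[OF yc, of \<kappa> \<mu>L \<mu>R] N5 yfacts(8) muR by simp
  next
    case 3
    then have "m \<noteq> k" using assms(2) yfacts(9) by auto
    then have "dB y m \<le> 0" using dB_y_le 3 by auto
    then have "\<kappa> / 2 * real_of_int (dB y m) \<le> 0" using kpos by (simp add: mult_nonneg_nonpos)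
    then show ?thesis using phi_sw[OF yc 3(1,2), of \<kappa> \<mu>L \<mu>R] 3(3) by simp
  qed
qed

lemma Gamma_y: "GG y = - \<kappa> / 2"
proof -
  have "GG y = - (\<kappa> / 2)"
    by (rule Max_phi[OF _ adj_y_x phi_y_x]) (use phi_y_le phi_y_x kpos in fastforce)
  then show ?thesis by simp
qed

lemma U_y: "UU y w = - ph y w + \<kappa> / 2"
  unfolding Ucost_def Gamma_y by simp

lemma pref_y_iff: "preferred_successor \<kappa> \<mu>L \<mu>R N y w \<longleftrightarrow> w = x"
proof
  assume "preferred_successor \<kappa> \<mu>L \<mu>R N y w"
  then have "adjacent N y w" "ph y w = \<kappa> / 2" using U_y unfolding preferred_successor_def by auto
  then show "w = x" using phi_y_le kpos by fastforce
qed (use adj_y_x U_y phi_y_x preferred_successor_def in auto)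

lemma U_y_out: "adjacent N y w \<Longrightarrow> w \<noteq> x \<Longrightarrow> UU y w \<ge> cc"
  using U_y phi_y_le[of w] unfolding cc_def by fastforce

end
end


lemma path_of_rtrancl:
  assumes "(adjacent N)\<^sup>*\<^sup>* a b" "a \<in> conf N"
  shows "\<exists>D. is_path N D a b"
  using assms(1)
proof (induction rule: rtranclp_induct)
  case base
  then show ?case using assms(2) unfolding is_path_def by (intro exI[of _ "[a]"]) auto
next
  case (step b c)
  then obtain D where D: "is_path N D a b" by blast
  have "is_path N (D @ [c]) a c" unfolding is_path_def
  proof (intro conjI allI impI)
    show "D @ [c] \<noteq> []" "last (D @ [c]) = c" by auto
    show "hd (D @ [c]) = a" "a \<in> conf N" using D unfolding is_path_def by auto
    fix m assume m: "m + 1 < length (D @ [c])"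
    show "adjacent N ((D @ [c]) ! m) ((D @ [c]) ! (m + 1))"
    proof (cases "m + 1 < length D")
      case True then show ?thesis using D unfolding is_path_def by (auto simp: nth_append)
    next
      case False
      then have "m = length D - 1" using m by simp
      moreover have "D ! (length D - 1) = b" using D unfolding is_path_def by (metis last_conv_nth)
      moreover have "D \<noteq> []" using D unfolding is_path_def by auto
      ultimately show ?thesis using step(2) by (auto simp: nth_append)
    qed
  qed
  then show ?case by blast
qed

lemma clear_step:
  assumes "u \<in> conf N" "j < N" "u!j = 1" "\<forall>i<j. u!i = 0"
  shows "(adjacent N)\<^sup>*\<^sup>* u (u[j := 0])"
  using assms
proof (induction j arbitrary: u)
  case 0
  have "flip u 1 = u[0 := 0]" unfolding flip1_eq using 0 by simp
  moreover have "adjacent N u (flip u 1)" using 0 unfolding adjacent_def jump_def by auto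
  ultimately show ?case by auto
next
  case (Suc j)
  have l: "length u = N" using Suc.prems conf_len by auto
  let ?w = "sw u j"
  have w: "?w = u[j := 1, Suc j := 0]" unfolding sw_def using Suc.prems by simp
  have adj: "adjacent N u ?w" unfolding adjacent_def jump_def swap_jump_iff using Suc.prems by auto
  have "j + 1 < N" using Suc.prems by simp
  then have wc: "?w \<in> conf N" using conf_sw[OF Suc.prems(1)] by blast
  have "(adjacent N)\<^sup>*\<^sup>* ?w (?w[j := 0])"
    by (rule Suc.IH[OF wc]) (use Suc.prems l in \<open>auto simp: w nth_list_update\<close>)
  moreover have "?w[j := 0] = u[Suc j := 0]"
  proof -
    have "?w[j := 0] = u[j := 0, Suc j := 0]" unfolding w by (simp add: list_update_swap)
    also have "u[j := 0] = u" using Suc.prems by (metis lessI list_update_id)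
    finally show ?thesis .
  qed
  ultimately show ?case using adj by (metis converse_rtranclp_into_rtranclp)
qed

lemma reach_zero:
  assumes "u \<in> conf N"
  shows "(adjacent N)\<^sup>*\<^sup>* u (replicate N 0)"
proof -
  have l: "length u = N" using assms conf_len by auto
  define z where "z k = map (\<lambda>i. if i < k then 0 else u!i) [0..<N]" for k
  have zn: "\<And>i. i < N \<Longrightarrow> z k ! i = (if i < k then 0 else u!i)" for k unfolding z_def by simp
  have zl: "length (z k) = N" for k unfolding z_def by simp
  have zc: "z k \<in> conf N" for k
  proof -
    have "\<And>i. i < N \<Longrightarrow> u!i \<in> {0,1}" using conf_nth[OF assms] by (auto simp: le_Suc_eq)
    then show ?thesis unfolding z_def conf_def by force
  qed
  have "k \<le> N \<Longrightarrow> (adjacent N)\<^sup>*\<^sup>* u (z k)" for k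
  proof (induction k)
    case 0
    have "z 0 = u" unfolding z_def using l map_nth[of u] by simp
    then show ?case by simp
  next
    case (Suc k)
    then have IH: "(adjacent N)\<^sup>*\<^sup>* u (z k)" by simp
    have e: "(z k)[k := 0] = z (Suc k)"
      using Suc.prems by (intro nth_equalityI) (auto simp: zl zn nth_list_update less_Suc_eq)
    show ?case
    proof (cases "u!k = 0")
      case True
      then have "z k = z (Suc k)" by (intro nth_equalityI) (auto simp: zl zn less_Suc_eq)
      then show ?thesis using IH by simp
    next
      case False
      then have "u!k = 1" using conf_nth[OF assms, of k] Suc.prems by auto
      then have "(adjacent N)\<^sup>*\<^sup>* (z k) ((z k)[k := 0])"
        using Suc.prems by (intro clear_step zc) (auto simp: zn)
      then show ?thesis using IH e by simp
    qed
  qed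
  moreover have "z N = replicate N 0" by (rule nth_equalityI) (auto simp: zl zn)
  ultimately show ?thesis by (metis order_refl)
qed

lemma adj_sym_rtrancl: "(adjacent N)\<^sup>*\<^sup>* a b \<Longrightarrow> (adjacent N)\<^sup>*\<^sup>* b a"
proof (induction rule: rtranclp_induct)
  case (step b c)
  have "adjacent N c b" using step(2) unfolding adjacent_def by blast
  then show ?case using step(3) by (metis converse_rtranclp_into_rtranclp)
qed simp

lemma connected: "u \<in> conf N \<Longrightarrow> v \<in> conf N \<Longrightarrow> \<exists>D. is_path N D u v"
  using reach_zero[of u N] adj_sym_rtrancl[OF reach_zero[of v N]]
  by (intro path_of_rtrancl) auto

lemma path_cost_nonneg: "is_path N D a b \<Longrightarrow> path_cost \<kappa> \<mu>L \<mu>R N D \<ge> 0"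
  unfolding path_cost_def is_path_def by (intro sum_nonneg U_nonneg) auto

lemma calU_zero:
  assumes "is_path N D a b" "path_cost \<kappa> \<mu>L \<mu>R N D = 0"
  shows "calU \<kappa> \<mu>L \<mu>R N a b = 0"
  unfolding calU_def
  by (rule cInf_eq_minimum) (use assms path_cost_nonneg in auto)

lemma calU_ge:
  assumes "a \<in> conf N" "b \<in> conf N" "\<And>D. is_path N D a b \<Longrightarrow> path_cost \<kappa> \<mu>L \<mu>R N D \<ge> c"
  shows "calU \<kappa> \<mu>L \<mu>R N a b \<ge> c"
  unfolding calU_def
  by (rule cInf_greatest) (use assms connected in auto)

lemma exit_index:
  "P (f 0) \<Longrightarrow> \<not> P (f n) \<Longrightarrow> \<exists>m<n. P (f m) \<and> \<not> P (f (Suc m))"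
proof (induction n)
  case (Suc n)
  then show ?case by (cases "P (f n)") (auto intro: less_SucI)
qed simp



lemma path2:
  assumes "a \<in> conf N" "adjacent N a b"
  shows "is_path N [a,b] a b" "path_cost \<kappa> \<mu>L \<mu>R N [a,b] = Ucost \<kappa> \<mu>L \<mu>R N a b"
  using assms unfolding is_path_def path_cost_def by auto

lemma path3:
  assumes "a \<in> conf N" "adjacent N a b" "adjacent N b c"
  shows "is_path N [a,b,c] a c"
    "path_cost \<kappa> \<mu>L \<mu>R N [a,b,c] = Ucost \<kappa> \<mu>L \<mu>R N a b + Ucost \<kappa> \<mu>L \<mu>R N b c"
  using assms unfolding is_path_def path_cost_def by (auto simp: less_Suc_eq numeral_2_eq_2)

context setting begin

lemma attr_eq: "x \<in> calP N \<Longrightarrow> attr_set \<kappa> \<mu>L \<mu>R N x = insert x {w. \<exists>k. bd x k \<and> w = sw x k}"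
  unfolding attr_set_def using pref_x_iff by auto

lemma U_x_sw: "x \<in> calP N \<Longrightarrow> bd x k \<Longrightarrow> UU x (sw x k) = 0"
  using pref_x_iff[of x "sw x k"] unfolding preferred_successor_def by auto

lemma adj_x_sw: "x \<in> calP N \<Longrightarrow> bd x k \<Longrightarrow> adjacent N x (sw x k)"
  using adj_x_iff by auto

lemma U_sw_x: "x \<in> calP N \<Longrightarrow> bd x k \<Longrightarrow> UU (sw x k) x = 0"
  using U_y phi_y_x by simp

lemma attractor_x:
  assumes xP: "x \<in> calP N"
  shows "attractor \<kappa> \<mu>L \<mu>R N (attr_set \<kappa> \<mu>L \<mu>R N x)"
proof -
  let ?A = "attr_set \<kappa> \<mu>L \<mu>R N x"
  note A = attr_eq[OF xP]
  have xcc: "x \<in> conf N" using xc[OF xP] .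
  have sub: "?A \<subseteq> conf N" unfolding A using xcc yfacts(2)[OF xP] by auto
  have zero: "calU \<kappa> \<mu>L \<mu>R N u v = 0" if uv: "u \<in> ?A" "v \<in> ?A" "u \<noteq> v" for u v
  proof -
    consider "u = x" "\<exists>k. bd x k \<and> v = sw x k" | "v = x" "\<exists>k. bd x k \<and> u = sw x k"
      | "\<exists>k j. bd x k \<and> bd x j \<and> u = sw x k \<and> v = sw x j"
      using uv unfolding A by auto
    then show ?thesis
    proof cases
      case 1
      then obtain k where k: "bd x k" "v = sw x k" by auto
      show ?thesis using path2[OF xcc adj_x_sw[OF xP k(1)]] U_x_sw[OF xP k(1)] 1 k
        by (intro calU_zero[of N "[x, sw x k]"]) auto
    next
      case 2
      then obtain k where k: "bd x k" "u = sw x k" by auto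
      show ?thesis using path2[OF yfacts(2)[OF xP k(1)] adj_y_x[OF xP k(1)]] U_sw_x[OF xP k(1)] 2 k
        by (intro calU_zero[of N "[sw x k, x]"]) auto
    next
      case 3
      then obtain k j where k: "bd x k" "bd x j" "u = sw x k" "v = sw x j" by auto
      show ?thesis
        using path3[OF yfacts(2)[OF xP k(1)] adj_y_x[OF xP k(1)] adj_x_sw[OF xP k(2)]]
          U_sw_x[OF xP k(1)] U_x_sw[OF xP k(2)] k
        by (intro calU_zero[of N "[sw x k, x, sw x j]"]) auto
    qed
  qed
  have pos: "calU \<kappa> \<mu>L \<mu>R N u v > 0" if "u \<in> ?A" "v \<in> conf N - ?A" for u v
  proof -
    have "calU \<kappa> \<mu>L \<mu>R N u v \<ge> cc"
    proof (rule calU_ge)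
      show "u \<in> conf N" "v \<in> conf N" using that sub by auto
      fix D assume D: "is_path N D u v"
      have ne: "D \<noteq> []" using D unfolding is_path_def by auto
      have "D!0 \<in> ?A" using D that ne unfolding is_path_def by (auto simp: hd_conv_nth)
      moreover have "D!(length D - 1) \<notin> ?A" using D that ne unfolding is_path_def by (auto simp: last_conv_nth)
      ultimately obtain m where m: "m < length D - 1" "D!m \<in> ?A" "D!(Suc m) \<notin> ?A"
        using exit_index[of "\<lambda>z. z \<in> ?A" "\<lambda>i. D!i" "length D - 1"] by auto
      have adj: "adjacent N (D!m) (D!(m+1))" using D m unfolding is_path_def by auto
      have ge: "UU (D!m) (D!(m+1)) \<ge> cc"
      proof -
        consider "D!m = x" | k where "bd x k" "D!m = sw x k" using m(2) unfolding A by auto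
        then show ?thesis
        proof cases
          case 1
          then show ?thesis using U_x_out[OF xP, of "D!(m+1)"] adj m(3) unfolding A by auto
        next
          case 2
          then show ?thesis using U_y_out[OF xP 2(1), of "D!(m+1)"] adj m(3) unfolding A by auto
        qed
      qed
      have "UU (D!m) (D!(m+1)) \<le> path_cost \<kappa> \<mu>L \<mu>R N D"
        unfolding path_cost_def
        by (rule member_le_sum) (use m D in \<open>auto intro!: U_nonneg simp: is_path_def\<close>)
      then show "path_cost \<kappa> \<mu>L \<mu>R N D \<ge> cc" using ge by simp
    qed
    then show ?thesis using cc_pos by simp
  qed
  show ?thesis unfolding attractor_def using sub zero pos unfolding A by auto
qed

lemma disjoint_x:
  assumes xP: "x \<in> calP N" and yP: "v \<in> calP N" and ne: "v \<noteq> x"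
  shows "attr_set \<kappa> \<mu>L \<mu>R N x \<inter> attr_set \<kappa> \<mu>L \<mu>R N v = {}"
proof (rule ccontr)
  assume "attr_set \<kappa> \<mu>L \<mu>R N x \<inter> attr_set \<kappa> \<mu>L \<mu>R N v \<noteq> {}"
  then obtain z where z: "z \<in> attr_set \<kappa> \<mu>L \<mu>R N x" "z \<in> attr_set \<kappa> \<mu>L \<mu>R N v" by blast
  consider "z = x" "z = v" | "z = x" "\<exists>j. bd v j \<and> z = sw v j" | "z = v" "\<exists>k. bd x k \<and> z = sw x k"
    | "\<exists>k j. bd x k \<and> bd v j \<and> z = sw x k \<and> z = sw v j"
    using z unfolding attr_eq[OF xP] attr_eq[OF yP] by auto
  then show False
  proof cases
    case 1 then show False using ne by simp
  next
    case 2
    then obtain j where j: "bd v j" "x = sw v j" by auto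
    have "GG x = - \<kappa> / 2" using Gamma_y[OF yP j(1)] j(2) by simp
    then show False using Gamma_x[OF xP] kpos by simp
  next
    case 3
    then obtain k where k: "bd x k" "v = sw x k" by auto
    have "GG v = - \<kappa> / 2" using Gamma_y[OF xP k(1)] k(2) by simp
    then show False using Gamma_x[OF yP] kpos by simp
  next
    case 4
    then obtain k j where kj: "bd x k" "bd v j" "z = sw x k" "z = sw v j" by auto
    have "preferred_successor \<kappa> \<mu>L \<mu>R N z x" using pref_y_iff[OF xP kj(1), of x] kj(3) by simp
    then show False using pref_y_iff[OF yP kj(2), of x] kj(4) ne by simp
  qed
qed

end

theorem corollary1:
  fixes N :: nat and \<kappa> \<mu>L \<mu>R :: real and x :: "nat list"
  assumes "N \<ge> 5" and "\<mu>L > \<kappa>" and "\<kappa> > 0" and "0 > \<mu>R" and "\<bar>\<mu>R\<bar> > \<kappa>"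
    and "x \<in> calP N"
  shows "attractor \<kappa> \<mu>L \<mu>R N (attr_set \<kappa> \<mu>L \<mu>R N x) \<and>
    (\<forall>y\<in>calP N. y \<noteq> x \<longrightarrow> attr_set \<kappa> \<mu>L \<mu>R N x \<inter> attr_set \<kappa> \<mu>L \<mu>R N y = {})"
proof -
  interpret setting N \<kappa> \<mu>L \<mu>R
    by unfold_locales (use assms in auto)
  show ?thesis using attractor_x[OF assms(6)] disjoint_x[OF assms(6)] by blast
qed



end
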